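(* Consider the coordination game described in the context in which each agent $i$ observes only the signal $z_i=A-\theta+\rho_i$. Suppose $\rho_i\in[-\sigma,\sigma]$ almost surely (its density vanishes outside $[-\sigma,\sigma]$), where $0<\sigma<\tfrac12$. Then there exists a continuum (an uncountable family) of distinct equilibria $A(\cdot)$.
   Context: A unit mass of agents $i\in[0,1]$ each choose $a_i\in\{0,1\}$ ($a_i=1$: attack the status quo). The aggregate attack is $A=\int_0^1 a_i\,di$. The status quo has strength $\theta\in\mathbb{R}$ and is abandoned iff $A\ge\theta$. An attacking agent pays cost $c\in(0,1)$ and gets $1$ if the status quo is abandoned, otherwise nothing; not attacking yields $0$. Agents hold an (improper) uniform prior over $\theta$ on $\mathbb{R}$. Agent $i$ receives a single private signal $z_i=A-\theta+\rho_i$, where the errors $\rho_i$ are i.i.d. across agents with density $g$; the structure is common knowledge. Given a conjectured (measurable) aggregate attack function $A:\mathbb{R}\to[0,1]$, the posterior of an agent with signal $z$ is $P[\theta\in S\mid z,A(\cdot)]=\int_S g(z-A(\theta)+\theta)\,d\theta\big/\int_{\mathbb{R}} g(z-A(\theta)+\theta)\,d\theta$. An equilibrium is a function $A:\mathbb{R}\to[0,1]$ such that for all $\theta\in\mathbb{R}$, $A(\theta)=\int_{\mathbb{R}}\chi\{\rho: P[A(\theta')\ge\theta'\mid z=A(\theta)-\theta+\rho,\,A(\cdot)]\ge c\}\,g(\rho)\,d\rho$, where $\theta'$ is the random fundamental under the posterior and $\chi$ is the indicator function. *)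

theory Defs
  imports "HOL-Analysis.Analysis"
begin

text \<open>Posterior probability of a set S of fundamentals, given signal z, conjectured
aggregate attack function A and error density g (improper uniform prior on theta).\<close>
definition posterior ::
  "(real \<Rightarrow> real) \<Rightarrow> (real \<Rightarrow> real) \<Rightarrow> real set \<Rightarrow> real \<Rightarrow> real" where
  "posterior g A S z =
     (LINT t|lborel. indicator S t * g (z - A t + t)) /
     (LINT t|lborel. g (z - A t + t))"

definition abandon_set :: "(real \<Rightarrow> real) \<Rightarrow> real set" where
  "abandon_set A = {t. A t \<ge> t}"

definition is_equilibrium :: "(real \<Rightarrow> real) \<Rightarrow> real \<Rightarrow> (real \<Rightarrow> real) \<Rightarrow> bool" where
  "is_equilibrium g c A \<longleftrightarrow>
     A \<in> borel_measurable borel \<and>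
     (\<forall>t. 0 \<le> A t \<and> A t \<le> 1) \<and>
     (\<forall>t. A t = (LINT r|lborel.
                   indicator {r. posterior g A (abandon_set A) (A t - t + r) \<ge> c} r * g r))"

end

theory Submission
  imports Defs "HOL-Probability.Probability"
begin

context
  fixes g :: "real \<Rightarrow> real" and c \<sigma> :: real
  assumes c_pos: "0 < c" and c_lt1: "c < 1"
    and g_meas[measurable]: "g \<in> borel_measurable borel"
    and g_nonneg: "\<And>r. 0 \<le> g r"
    and g_int: "integrable lborel g"
    and g_total: "(LINT r|lborel. g r) = 1"
    and sigma_pos: "0 < \<sigma>" and sigma_lt: "\<sigma> < 1/2"
    and g_supp: "\<And>r. r \<notin> {-\<sigma>..\<sigma>} \<Longrightarrow> g r = 0"
begin

lemma sep:
  assumes "t1 \<le> k" "k < t2" "g (z - 1 + t1) \<noteq> 0" "g (z + t2) \<noteq> 0"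
  shows False
proof -
  have "z - 1 + t1 \<in> {-\<sigma>..\<sigma>}" "z + t2 \<in> {-\<sigma>..\<sigma>}" using assms g_supp by blast+
  then show False using assms(1,2) sigma_lt by auto
qed

lemma post_iff:
  assumes k: "0 \<le> k" "k \<le> 1"
  shows "c \<le> posterior g (\<lambda>t. if t \<le> k then 1 else 0) (abandon_set (\<lambda>t. if t \<le> k then 1 else 0)) z
     \<longleftrightarrow> (LINT s|lborel. indicator {..z+k-1} s * g s) \<noteq> 0"
proof -
  define Ak :: "real \<Rightarrow> real" where "Ak = (\<lambda>t. if t \<le> k then 1 else 0)"
  have ab: "abandon_set Ak = {..k}" using k by (auto simp: abandon_set_def Ak_def)
  define N where "N = (LINT t|lborel. indicator {..k} t * g (z - Ak t + t))"
  have N1: "N = (LINT t|lborel. indicator {..k} t * g (z - 1 + t))"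
    unfolding N_def by (rule Bochner_Integration.integral_cong) (auto simp: Ak_def indicator_def)
  have N2: "(LINT s|lborel. indicator {..z+k-1} s * g s) = N"
    unfolding N1
    using lborel_integral_real_affine[of 1 "\<lambda>s. indicator {..z+k-1} s * g s" "z-1"]
    by (simp add: indicator_def algebra_simps)
  have post: "posterior g Ak (abandon_set Ak) z = N / (LINT t|lborel. g (z - Ak t + t))"
    unfolding posterior_def ab N_def ..
  show ?thesis
  proof (cases "\<forall>t\<le>k. g (z - 1 + t) = 0")
    case True
    have "(\<lambda>t. indicator {..k} t * g (z - 1 + t)) = (\<lambda>t. 0::real)"
      using True by (auto simp: indicator_def)
    then have "N = 0" unfolding N1 by simp
    then show ?thesis using post N2 c_pos by (simp add: Ak_def)
  next
    case False
    then obtain t1 where "t1 \<le> k" "g (z - 1 + t1) \<noteq> 0" by auto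
    then have up: "\<forall>t>k. g (z + t) = 0" using sep by blast
    have "(LINT t|lborel. g (z - Ak t + t)) = N"
      unfolding N_def by (rule Bochner_Integration.integral_cong) (auto simp: Ak_def indicator_def up)
    then show ?thesis using post N2 c_pos c_lt1 by (simp add: Ak_def)
  qed
qed

definition "Md = density lborel (\<lambda>x. ennreal (g x))"

lemma sets_Md[simp, measurable_cong]: "sets Md = sets borel"
  by (simp add: Md_def)

lemma space_Md[simp]: "space Md = UNIV"
  by (simp add: Md_def)

lemma measure_Md: "S \<in> sets borel \<Longrightarrow> measure Md S = (LINT x|lborel. indicator S x * g x)"
proof -
  assume S: "S \<in> sets borel"
  have "measure Md S = integral\<^sup>L Md (indicator S)" by simp
  also have "\<dots> = (LINT x|lborel. g x *\<^sub>R indicator S x)"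
    unfolding Md_def using S by (intro integral_density) (auto simp: g_nonneg)
  finally show ?thesis by (simp add: mult.commute)
qed

lemma Md_prob: "real_distribution Md"
proof -
  have "emeasure Md UNIV = (\<integral>\<^sup>+ x. ennreal (g x) \<partial>lborel)"
    unfolding Md_def by (simp add: emeasure_density)
  also have "\<dots> = ennreal (LINT x|lborel. g x)"
    by (rule nn_integral_eq_integral) (auto simp: g_int g_nonneg)
  finally have "emeasure Md (space Md) = 1" using g_total by simp
  then interpret prob_space Md by (rule prob_spaceI)
  show ?thesis by unfold_locales simp
qed

interpretation Md: real_distribution Md by (rule Md_prob)

lemma cdf_Md: "cdf Md x = (LINT s|lborel. indicator {..x} s * g s)"
  by (simp add: cdf_def measure_Md)

lemma cdf_low: "x < -\<sigma> \<Longrightarrow> cdf Md x = 0"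
proof -
  assume x: "x < -\<sigma>"
  have "(\<lambda>s. indicator {..x} s * g s) = (\<lambda>s. 0::real)"
    using x g_supp by (force simp: indicator_def)
  then show ?thesis by (simp add: cdf_Md)
qed

lemma cdf_high: "cdf Md \<sigma> = 1"
proof -
  have "(\<lambda>s. indicator {..\<sigma>} s * g s) = g"
    using g_supp by (force simp: indicator_def)
  then show ?thesis by (simp add: cdf_Md g_total)
qed

lemma cdf_cont: "isCont (cdf Md) x"
proof -
  have "measure Md {x} = (LINT s|lborel. indicator {x} s * g s)" by (simp add: measure_Md)
  also have "\<dots> = 0"
    by (rule integral_eq_zero_AE) (auto intro!: eventually_mono[OF AE_lborel_singleton[of x]])
  finally show ?thesis by (simp add: Md.isCont_cdf)
qed

lemma null_T: "measure Md {r. cdf Md r = 0} = 0"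
proof -
  define T where "T = {r. cdf Md r = 0}"
  have cl: "closed T" unfolding T_def
    by (intro closed_Collect_eq continuous_at_imp_continuous_on) (auto intro: cdf_cont)
  show ?thesis
  proof (cases "T = {}")
    case True then show ?thesis by (simp add: T_def)
  next
    case False
    have bd: "T \<subseteq> {..\<sigma>}"
    proof
      fix x assume "x \<in> T"
      then have "cdf Md x = 0" by (simp add: T_def)
      then show "x \<in> {..\<sigma>}" using Md.cdf_nondecreasing[of \<sigma> x] cdf_high by (cases "x \<le> \<sigma>") auto
    qed
    then have bda: "bdd_above T" by (meson bdd_above_Iic bdd_above_mono)
    define s where "s = Sup T"
    have sT: "s \<in> T" unfolding s_def using closed_contains_Sup[OF False bda cl] .
    have sub: "T \<subseteq> {..s}" unfolding s_def using bda by (auto intro: cSup_upper)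
    have "measure Md T \<le> measure Md {..s}"
      by (rule Md.finite_measure_mono[OF sub]) simp
    also have "\<dots> = 0" using sT by (simp add: T_def cdf_def)
    finally have "measure Md T \<le> 0" .
    then show ?thesis unfolding T_def[symmetric] using measure_nonneg[of Md T] by linarith
  qed
qed

lemma key:
  assumes a: "0 \<le> a"
  shows "(LINT r|lborel. indicator {r. (LINT s|lborel. indicator {..a+r} s * g s) \<noteq> 0} r * g r) = 1"
proof -
  define P where "P = {r. cdf Md (a+r) \<noteq> 0}"
  define T where "T = {r. cdf Md r = 0}"
  have eqP: "{r. (LINT s|lborel. indicator {..a+r} s * g s) \<noteq> 0} = P"
    by (simp add: P_def cdf_Md)
  have m1[measurable]: "(\<lambda>r. cdf Md (a+r)) \<in> borel_measurable borel"
    by (rule borel_measurable_mono) (auto simp: mono_def intro: Md.cdf_nondecreasing)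
  have m2[measurable]: "cdf Md \<in> borel_measurable borel"
    by (rule borel_measurable_mono) (auto simp: mono_def intro: Md.cdf_nondecreasing)
  have PB: "P \<in> sets borel" unfolding P_def by measurable
  have TB: "T \<in> sets borel" unfolding T_def by measurable
  have U: "UNIV = P \<union> T"
  proof -
    { fix r assume "r \<notin> P"
      then have "cdf Md (a+r) = 0" by (simp add: P_def)
      moreover have "cdf Md r \<le> cdf Md (a+r)" using a by (intro Md.cdf_nondecreasing) simp
      ultimately have "r \<in> T" using Md.cdf_nonneg[of r] by (simp add: T_def) }
    then show ?thesis by blast
  qed
  have "1 = measure Md (P \<union> T)" using U[symmetric] Md.prob_space space_Md by simp
  also have "\<dots> \<le> measure Md P + measure Md T"
    using PB TB by (intro measure_Un_le) auto
  also have "\<dots> = measure Md P" using null_T by (simp add: T_def)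
  finally have "1 \<le> measure Md P" .
  moreover have "measure Md P \<le> 1" by (rule Md.prob_le_1)
  ultimately have "measure Md P = 1" by linarith
  then show ?thesis using eqP measure_Md[OF PB] by simp
qed

lemma zero:
  assumes "k < \<theta>"
  shows "(LINT r|lborel. indicator {r. (LINT s|lborel. indicator {..k-\<theta>+r-1} s * g s) \<noteq> 0} r * g r) = 0"
proof -
  have "(\<lambda>r. indicator {r. (LINT s|lborel. indicator {..k-\<theta>+r-1} s * g s) \<noteq> 0} r * g r) = (\<lambda>r. 0::real)"
  proof
    fix r
    show "indicator {r. (LINT s|lborel. indicator {..k-\<theta>+r-1} s * g s) \<noteq> 0} r * g r = 0"
    proof (cases "g r = 0")
      case False
      then have "r \<le> \<sigma>" using g_supp by force
      then have "k-\<theta>+r-1 < -\<sigma>" using assms sigma_lt by linarith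
      then have "cdf Md (k-\<theta>+r-1) = 0" by (rule cdf_low)
      then show ?thesis by (simp add: cdf_Md)
    qed simp
  qed
  then show ?thesis by simp
qed

lemma equil:
  assumes k: "0 \<le> k" "k \<le> 1"
  shows "is_equilibrium g c (\<lambda>t. if t \<le> k then 1 else 0)"
  unfolding is_equilibrium_def
proof (intro conjI allI)
  show "(\<lambda>t. if t \<le> k then 1 else 0::real) \<in> borel_measurable borel" by measurable
next
  fix t show "0 \<le> (if t \<le> k then 1 else 0::real)" by simp
next
  fix t show "(if t \<le> k then 1 else 0::real) \<le> 1" by simp
next
  fix \<theta>
  define Ak :: "real \<Rightarrow> real" where "Ak = (\<lambda>t. if t \<le> k then 1 else 0)"
  have S: "{r. c \<le> posterior g Ak (abandon_set Ak) (Ak \<theta> - \<theta> + r)}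
     = {r. (LINT s|lborel. indicator {..Ak \<theta> - \<theta> + r + k - 1} s * g s) \<noteq> 0}"
    unfolding Ak_def using post_iff[OF k] by simp
  show "Ak \<theta> = (LINT r|lborel. indicator {r. c \<le> posterior g Ak (abandon_set Ak) (Ak \<theta> - \<theta> + r)} r * g r)"
  proof (cases "\<theta> \<le> k")
    case True
    have h: "\<And>r. Ak \<theta> - \<theta> + r + k - 1 = (k - \<theta>) + r" using True by (simp add: Ak_def)
    then have "{r. c \<le> posterior g Ak (abandon_set Ak) (Ak \<theta> - \<theta> + r)}
        = {r. (LINT s|lborel. indicator {..(k-\<theta>)+r} s * g s) \<noteq> 0}" unfolding S by (simp only: h)
    then show ?thesis using key[of "k-\<theta>"] True by (simp add: Ak_def)
  next
    case False
    have h: "\<And>r. Ak \<theta> - \<theta> + r + k - 1 = k-\<theta>+r-1" using False by (simp add: Ak_def)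
    then have "{r. c \<le> posterior g Ak (abandon_set Ak) (Ak \<theta> - \<theta> + r)}
        = {r. (LINT s|lborel. indicator {..k-\<theta>+r-1} s * g s) \<noteq> 0}" unfolding S by (simp only: h)
    then show ?thesis using zero[of k \<theta>] False by (simp add: Ak_def)
  qed
qed

end

theorem proposition3:
  fixes g :: "real \<Rightarrow> real" and c \<sigma> :: real
  assumes c_pos: "0 < c" and c_lt1: "c < 1"
    and g_meas: "g \<in> borel_measurable borel"
    and g_nonneg: "\<And>r. 0 \<le> g r"
    and g_int: "integrable lborel g"
    and g_total: "(LINT r|lborel. g r) = 1"
    and sigma_pos: "0 < \<sigma>" and sigma_lt: "\<sigma> < 1/2"
    and g_supp: "\<And>r. r \<notin> {-\<sigma>..\<sigma>} \<Longrightarrow> g r = 0"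
  shows "uncountable {A. is_equilibrium g c A}"
proof
  define F :: "real \<Rightarrow> real \<Rightarrow> real" where "F = (\<lambda>k t. if t \<le> k then 1 else 0)"
  assume cnt: "countable {A. is_equilibrium g c A}"
  have "F ` {0..1} \<subseteq> {A. is_equilibrium g c A}"
    using equil[OF assms] by (auto simp: F_def)
  then have "countable (F ` {0..1})" using cnt countable_subset by blast
  moreover have "inj_on F {0..1}"
  proof (rule inj_onI)
    fix x y :: real assume "F x = F y"
    then have "F x x = F y x" "F x y = F y y" by auto
    then show "x = y" by (auto simp: F_def split: if_splits)
  qed
  ultimately have "countable {0..1::real}" by (rule countable_image_inj_on)
  then show False using uncountable_closed_interval[of 0 1] by simp
qed

end
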